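(* Let $\mathbf A=(\mathbf a_1,\ldots,\mathbf a_m)^\top\in\mathbb C^{m\times d}$ and $\mathbf b=(b_1,\ldots,b_m)^\top\in\mathbb C^m$. Then the following are equivalent: (A) $(\mathbf A,\mathbf b)$ is affine phase retrievable for $\mathbb C^d$. (B) The map $\mathbf M^2_{\mathbf A,\mathbf b}$ is injective on $\mathbb C^d$. (C) For any $\mathbf u,\mathbf v\in\mathbb C^d$ with $\mathbf u\neq0$, there exists $1\le k\le m$ such that $\mathrm{Re}\big(\langle\mathbf u,\mathbf a_k\rangle(\langle\mathbf a_k,\mathbf v\rangle+b_k)\big)\neq 0$. (D) Viewing $\mathbf M^2_{\mathbf A,\mathbf b}$ as a map $\mathbb R^{2d}\to\mathbb R^m$ (via $\mathbf x=\mathbf x_R+i\mathbf x_I\leftrightarrow(\mathbf x_R,\mathbf x_I)$), its real Jacobian $J(\mathbf x)$ has rank $2d$ for all $\mathbf x\in\mathbb R^{2d}$.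
   Context: For $\mathbf u,\mathbf v\in\mathbb C^d$, $\langle\mathbf u,\mathbf v\rangle=\sum_i\overline{u_i}v_i$. Define $\mathbf M_{\mathbf A,\mathbf b}(\mathbf x)=(|\langle\mathbf a_1,\mathbf x\rangle+b_1|,\ldots,|\langle\mathbf a_m,\mathbf x\rangle+b_m|)$ and $\mathbf M^2_{\mathbf A,\mathbf b}(\mathbf x)=(|\langle\mathbf a_1,\mathbf x\rangle+b_1|^2,\ldots,|\langle\mathbf a_m,\mathbf x\rangle+b_m|^2)$. $(\mathbf A,\mathbf b)$ is called affine phase retrievable for $\mathbb C^d$ if $\mathbf M_{\mathbf A,\mathbf b}$ is injective on $\mathbb C^d$. *)

theory Defs
  imports "HOL-Analysis.Analysis"
begin

definition cinner :: "complex ^ 'd \<Rightarrow> complex ^ 'd \<Rightarrow> complex" where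
  "cinner u v = (\<Sum>i\<in>UNIV. cnj (u $ i) * v $ i)"

text \<open>Rows of A are the measurement vectors a_k = A $ k.\<close>
definition M_map :: "complex ^ 'd ^ 'm \<Rightarrow> complex ^ 'm \<Rightarrow> complex ^ 'd \<Rightarrow> real ^ 'm" where
  "M_map A b x = (\<chi> k. cmod (cinner (A $ k) x + b $ k))"

definition M2_map :: "complex ^ 'd ^ 'm \<Rightarrow> complex ^ 'm \<Rightarrow> complex ^ 'd \<Rightarrow> real ^ 'm" where
  "M2_map A b x = (\<chi> k. (cmod (cinner (A $ k) x + b $ k))\<^sup>2)"

definition affine_phase_retrievable :: "complex ^ 'd ^ 'm \<Rightarrow> complex ^ 'm \<Rightarrow> bool" where
  "affine_phase_retrievable A b \<longleftrightarrow> inj (M_map A b)"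

text \<open>Identification R^{2d} = real^('d + 'd) with C^d: x = x_R + i x_I, x_R = Inl part, x_I = Inr part.\<close>
definition real_to_cvec :: "real ^ ('d + 'd) \<Rightarrow> complex ^ 'd" where
  "real_to_cvec y = (\<chi> i. Complex (y $ Inl i) (y $ Inr i))"

definition M2_real :: "complex ^ 'd ^ 'm \<Rightarrow> complex ^ 'm \<Rightarrow> real ^ ('d + 'd) \<Rightarrow> real ^ 'm" where
  "M2_real A b y = M2_map A b (real_to_cvec y)"

end

theory Submission
  imports Defs "HOL-Library.Cardinality"
begin

lemma cinner_add: "cinner a (x + y) = cinner a x + cinner a y"
  by (simp add: cinner_def sum.distrib algebra_simps)

lemma cinner_scaleR: "cinner a (c *\<^sub>R x) = of_real c * cinner a x"
  unfolding cinner_def vector_scaleR_component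
  by (simp add: sum_distrib_left algebra_simps scaleR_conv_of_real)

lemma cinner_scaleR': "cinner a (c *\<^sub>R x) = c *\<^sub>R cinner a x"
  using cinner_scaleR[of a c x] by (simp only: scaleR_conv_of_real[of c "cinner a x"])

lemma cinner_cnj: "cinner u a = cnj (cinner a u)"
  by (simp add: cinner_def mult.commute)

lemma cmod_diff_identity:
  fixes p q :: complex
  shows "(cmod (p + q))\<^sup>2 - (cmod (p - q))\<^sup>2 = 4 * Re (cnj q * p)"
  unfolding cmod_power2 by (simp add: power2_eq_square algebra_simps)

lemma M2_diff:
  "M2_map A b (v + u) $ k - M2_map A b (v - u) $ k
     = 4 * Re (cinner u (A $ k) * (cinner (A $ k) v + b $ k))"
proof -
  have ep: "cinner (A $ k) (v + u) + b $ k = (cinner (A $ k) v + b $ k) + cinner (A $ k) u"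
    by (simp add: cinner_add)
  have "cinner (A $ k) (v - u) = cinner (A $ k) v - cinner (A $ k) u"
    using cinner_add[of "A $ k" "v - u" u] by simp
  then have em: "cinner (A $ k) (v - u) + b $ k = (cinner (A $ k) v + b $ k) - cinner (A $ k) u"
    by simp
  show ?thesis
    by (simp only: M2_map_def vec_lambda_beta ep em cmod_diff_identity cinner_cnj[of u "A $ k"])
qed

lemma part_AB: "affine_phase_retrievable A b \<longleftrightarrow> inj (M2_map A b)"
proof -
  have e: "M2_map A b x = M2_map A b y \<longleftrightarrow> M_map A b x = M_map A b y" for x y
  proof
    assume h: "M2_map A b x = M2_map A b y"
    show "M_map A b x = M_map A b y"
    proof -
     have "M_map A b x $ k = M_map A b y $ k" for k
     proof -
      from h have "M2_map A b x $ k = M2_map A b y $ k" by simp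
      then have "(cmod (cinner (A $ k) x + b $ k))\<^sup>2 = (cmod (cinner (A $ k) y + b $ k))\<^sup>2"
        by (simp only: M2_map_def vec_lambda_beta)
      then have "cmod (cinner (A $ k) x + b $ k) = cmod (cinner (A $ k) y + b $ k)"
        by (simp add: power2_eq_iff_nonneg)
      then show "M_map A b x $ k = M_map A b y $ k" unfolding M_map_def by simp
     qed
     then show ?thesis by (simp add: vec_eq_iff)
    qed
  next
    assume "M_map A b x = M_map A b y"
    then show "M2_map A b x = M2_map A b y"
      unfolding M_map_def M2_map_def by (simp add: vec_eq_iff)
  qed
  show ?thesis unfolding affine_phase_retrievable_def inj_def by (simp only: e)
qed

lemma part_BC: "inj (M2_map A b) \<longleftrightarrow>
           (\<forall>u v :: complex ^ 'd. u \<noteq> 0 \<longrightarrow>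
              (\<exists>k. Re (cinner u (A $ k) * (cinner (A $ k) v + b $ k)) \<noteq> 0))"
proof -
  have key: "M2_map A b (v + u) = M2_map A b (v - u) \<longleftrightarrow>
        (\<forall>k. Re (cinner u (A $ k) * (cinner (A $ k) v + b $ k)) = 0)" for u v :: "complex ^ 'd"
    using M2_diff[of A b v u] by (auto simp: vec_eq_iff)
  show ?thesis
  proof
    assume inj: "inj (M2_map A b)"
    show "\<forall>u v :: complex ^ 'd. u \<noteq> 0 \<longrightarrow>
              (\<exists>k. Re (cinner u (A $ k) * (cinner (A $ k) v + b $ k)) \<noteq> 0)"
    proof (intro allI impI)
      fix u v :: "complex ^ 'd" assume "u \<noteq> 0"
      have "v + u \<noteq> v - u" proof
        assume "v + u = v - u"
        then have "u + u = 0" by (simp add: algebra_simps)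
        then have "(2::real) *\<^sub>R u = 0" by (simp add: scaleR_2)
        then show False using \<open>u \<noteq> 0\<close> by simp
      qed
      then have "M2_map A b (v + u) \<noteq> M2_map A b (v - u)" using inj by (auto dest: injD)
      then show "\<exists>k. Re (cinner u (A $ k) * (cinner (A $ k) v + b $ k)) \<noteq> 0" using key by blast
    qed
  next
    assume C: "\<forall>u v :: complex ^ 'd. u \<noteq> 0 \<longrightarrow>
              (\<exists>k. Re (cinner u (A $ k) * (cinner (A $ k) v + b $ k)) \<noteq> 0)"
    show "inj (M2_map A b)"
    proof (rule injI)
      fix x y assume h: "M2_map A b x = M2_map A b y"
      define v where "v = (1/2::real) *\<^sub>R (x + y)"
      define u where "u = (1/2::real) *\<^sub>R (x - y)"
      have e1: "(x+y)+(x-y) = (2::real) *\<^sub>R x" by (simp add: scaleR_2 algebra_simps)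
      have e2: "(x+y)-(x-y) = (2::real) *\<^sub>R y" by (simp add: scaleR_2 algebra_simps)
      have "v + u = (1/2::real) *\<^sub>R ((x+y)+(x-y))" unfolding u_def v_def by (simp only: scaleR_right_distrib)
      also have "\<dots> = x" unfolding e1 by simp
      finally have "x = v + u" by simp
      have "v - u = (1/2::real) *\<^sub>R ((x+y)-(x-y))" unfolding u_def v_def by (simp only: scaleR_right_diff_distrib)
      also have "\<dots> = y" unfolding e2 by simp
      finally have "y = v - u" by simp
      note \<open>x = v + u\<close> this
      then have "\<forall>k. Re (cinner u (A $ k) * (cinner (A $ k) v + b $ k)) = 0" using key h by simp
      then have "u = 0" using C by blast
      then show "x = y" unfolding u_def by simp
    qed
  qed
qed

lemma linear_rtc: "linear (real_to_cvec :: real ^ ('d::finite + 'd) \<Rightarrow> complex ^ 'd)"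
  by (rule linearI) (simp_all add: real_to_cvec_def vec_eq_iff complex_eq_iff)

lemma bl_rtc: "bounded_linear (real_to_cvec :: real ^ ('d::finite + 'd) \<Rightarrow> complex ^ 'd)"
  using linear_rtc linear_conv_bounded_linear by blast

lemma bl_cinner: "bounded_linear (\<lambda>y::real ^ ('d::finite + 'd). cinner a (real_to_cvec y))"
proof -
  have "linear (\<lambda>y::real ^ ('d::finite + 'd). cinner a (real_to_cvec y))"
    by (rule linearI) (simp_all add: linear_add[OF linear_rtc] linear_scale[OF linear_rtc]
        cinner_add cinner_scaleR')
  then show ?thesis using linear_conv_bounded_linear by blast
qed

lemma M2_real_comp_deriv:
  fixes A :: "complex ^ 'd ^ 'm" and b :: "complex ^ 'm"
  shows "((\<lambda>y. M2_real A b y $ k) has_derivative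
     (\<lambda>h. 2 * Re (cinner (real_to_cvec h) (A $ k) * (cinner (A $ k) (real_to_cvec y) + b $ k)))) (at y)"
proof -
  let ?L = "\<lambda>y::real ^ ('d + 'd). cinner (A $ k) (real_to_cvec y)"
  have bl: "bounded_linear ?L" by (rule bl_cinner)
  have dL: "((\<lambda>y. ?L y + b $ k) has_derivative ?L) (at y)"
    using has_derivative_add[OF bounded_linear.has_derivative[OF bl has_derivative_ident] has_derivative_const[of "b $ k"]] by simp
  have D: "((\<lambda>y. (?L y + b $ k) \<bullet> (?L y + b $ k)) has_derivative
      (\<lambda>h. (?L y + b $ k) \<bullet> ?L h + ?L h \<bullet> (?L y + b $ k))) (at y)"
    by (rule has_derivative_inner[OF dL dL])
  have e1: "(\<lambda>y. M2_real A b y $ k) = (\<lambda>y. (?L y + b $ k) \<bullet> (?L y + b $ k))"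
    by (rule ext) (simp only: M2_real_def M2_map_def vec_lambda_beta power2_norm_eq_inner)
  have e2: "(\<lambda>h. (?L y + b $ k) \<bullet> ?L h + ?L h \<bullet> (?L y + b $ k)) =
     (\<lambda>h. 2 * Re (cinner (real_to_cvec h) (A $ k) * (cinner (A $ k) (real_to_cvec y) + b $ k)))"
    by (rule ext) (simp add: cinner_cnj[of "real_to_cvec _" "A $ k"] inner_complex_def)
  show ?thesis using D unfolding e1 e2 .
qed

lemma M2_real_deriv:
  fixes A :: "complex ^ 'd ^ 'm" and b :: "complex ^ 'm"
  shows "(M2_real A b has_derivative
     (\<lambda>h. \<chi> k. 2 * Re (cinner (real_to_cvec h) (A $ k) * (cinner (A $ k) (real_to_cvec y) + b $ k)))) (at y)"
proof (subst has_derivative_componentwise_within, intro ballI)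
  fix i :: "real ^ 'm" assume "i \<in> Basis"
  then obtain k where i: "i = axis k 1" by (auto simp: Basis_vec_def)
  have *: "x \<bullet> i = x $ k" for x :: "real ^ 'm" by (simp add: i inner_axis)
  show "((\<lambda>x. M2_real A b x \<bullet> i) has_derivative
         (\<lambda>h. (\<chi> k. 2 * Re (cinner (real_to_cvec h) (A $ k) * (cinner (A $ k) (real_to_cvec y) + b $ k))) \<bullet> i)) (at y within UNIV)"
    unfolding * vec_lambda_beta using M2_real_comp_deriv[of A b k y] by assumption
qed

lemma rtc_surj: "\<exists>h. real_to_cvec (h :: real ^ ('d::finite + 'd)) = u"
proof
  show "real_to_cvec ((\<chi> j. case j of Inl i \<Rightarrow> Re (u $ i) | Inr i \<Rightarrow> Im (u $ i)) :: real ^ ('d + 'd)) = u"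
    by (simp add: real_to_cvec_def vec_eq_iff)
qed

lemma rtc_zero: "real_to_cvec (h :: real ^ ('d::finite + 'd)) = 0 \<longleftrightarrow> h = 0"
proof
  assume "real_to_cvec h = 0"
  then have a: "\<forall>i. h $ Inl i = 0 \<and> h $ Inr i = 0"
    by (simp add: real_to_cvec_def vec_eq_iff complex_eq_iff)
  have "h $ j = 0" for j
    using a by (cases j) auto
  then show "h = 0" by (simp add: vec_eq_iff)
next
  assume "h = 0" then show "real_to_cvec h = 0"
    by (simp add: real_to_cvec_def vec_eq_iff complex_eq_iff)
qed

lemma rank_iff:
  fixes A :: "complex ^ 'd ^ 'm" and b :: "complex ^ 'm" and y :: "real ^ ('d + 'd)"
  shows "rank (jacobian (M2_real A b) (at y)) = 2 * CARD('d) \<longleftrightarrow>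
    (\<forall>h. real_to_cvec h \<noteq> 0 \<longrightarrow>
       (\<exists>k. Re (cinner (real_to_cvec h) (A $ k) * (cinner (A $ k) (real_to_cvec y) + b $ k)) \<noteq> 0))"
proof -
  let ?D = "\<lambda>h. \<chi> k. 2 * Re (cinner (real_to_cvec h) (A $ k) * (cinner (A $ k) (real_to_cvec y) + b $ k))"
  let ?J = "jacobian (M2_real A b) (at y)"
  have d: "(M2_real A b has_derivative ?D) (at y)" by (rule M2_real_deriv)
  then have "M2_real A b differentiable at y" by (rule differentiableI)
  then have j: "(M2_real A b has_derivative (\<lambda>h. ?J *v h)) (at y)" using jacobian_works by blast
  have eq: "(\<lambda>h. ?J *v h) = ?D" using has_derivative_unique[OF j d] .
  have lin: "linear ?D" using has_derivative_linear[OF d] .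
  have "rank ?J = 2 * CARD('d) \<longleftrightarrow> inj ((*v) ?J)" using full_rank_injective[of ?J] by (simp add: mult_2)
  also have "\<dots> \<longleftrightarrow> inj ?D" unfolding eq ..
  also have "\<dots> \<longleftrightarrow> (\<forall>h. ?D h = 0 \<longrightarrow> h = 0)" by (rule linear_injective_0[OF lin])
  also have "\<dots> \<longleftrightarrow> (\<forall>h. real_to_cvec h \<noteq> 0 \<longrightarrow>
       (\<exists>k. Re (cinner (real_to_cvec h) (A $ k) * (cinner (A $ k) (real_to_cvec y) + b $ k)) \<noteq> 0))"
  proof -
    have z: "?D h = 0 \<longleftrightarrow> (\<forall>k. Re (cinner (real_to_cvec h) (A $ k) * (cinner (A $ k) (real_to_cvec y) + b $ k)) = 0)" for h
      by (simp add: vec_eq_iff)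
    show ?thesis using z rtc_zero by blast
  qed
  finally show ?thesis .
qed

lemma part_CD:
  fixes A :: "complex ^ 'd ^ 'm" and b :: "complex ^ 'm"
  shows "(\<forall>u v :: complex ^ 'd. u \<noteq> 0 \<longrightarrow>
              (\<exists>k. Re (cinner u (A $ k) * (cinner (A $ k) v + b $ k)) \<noteq> 0))
           \<longleftrightarrow> (\<forall>y :: real ^ ('d + 'd). rank (jacobian (M2_real A b) (at y)) = 2 * CARD('d))"
proof
  assume C: "\<forall>u v :: complex ^ 'd. u \<noteq> 0 \<longrightarrow>
              (\<exists>k. Re (cinner u (A $ k) * (cinner (A $ k) v + b $ k)) \<noteq> 0)"
  show "\<forall>y :: real ^ ('d + 'd). rank (jacobian (M2_real A b) (at y)) = 2 * CARD('d)"
    using C by (simp add: rank_iff)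
next
  assume R: "\<forall>y :: real ^ ('d + 'd). rank (jacobian (M2_real A b) (at y)) = 2 * CARD('d)"
  show "\<forall>u v :: complex ^ 'd. u \<noteq> 0 \<longrightarrow>
              (\<exists>k. Re (cinner u (A $ k) * (cinner (A $ k) v + b $ k)) \<noteq> 0)"
  proof (intro allI impI)
    fix u v :: "complex ^ 'd" assume u: "u \<noteq> 0"
    obtain h :: "real ^ ('d + 'd)" where h: "real_to_cvec h = u" using rtc_surj by blast
    obtain y :: "real ^ ('d + 'd)" where y: "real_to_cvec y = v" using rtc_surj by blast
    from R have "rank (jacobian (M2_real A b) (at y)) = 2 * CARD('d)" by blast
    then show "\<exists>k. Re (cinner u (A $ k) * (cinner (A $ k) v + b $ k)) \<noteq> 0"
      unfolding rank_iff using u h y by blast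
  qed
qed

theorem theorem3p1:
  fixes A :: "complex ^ 'd ^ 'm" and b :: "complex ^ 'm"
  shows "(affine_phase_retrievable A b \<longleftrightarrow> inj (M2_map A b))
       \<and> (inj (M2_map A b) \<longleftrightarrow>
           (\<forall>u v :: complex ^ 'd. u \<noteq> 0 \<longrightarrow>
              (\<exists>k. Re (cinner u (A $ k) * (cinner (A $ k) v + b $ k)) \<noteq> 0)))
       \<and> ((\<forall>u v :: complex ^ 'd. u \<noteq> 0 \<longrightarrow>
              (\<exists>k. Re (cinner u (A $ k) * (cinner (A $ k) v + b $ k)) \<noteq> 0))
           \<longleftrightarrow> (\<forall>y :: real ^ ('d + 'd). rank (jacobian (M2_real A b) (at y)) = 2 * CARD('d)))"
  using part_AB[of A b] part_BC[of A b] part_CD[of A b] by blast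

end
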